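(* Let $\mathcal{H}$ be a connected $k$-uniform hypergraph on $n$ vertices with degree sequence $d_{1}\geq\cdots\geq d_{n}$, and let $\mathcal{Q}(\mathcal{H})$ be its signless Laplacian tensor. Then (1) $\rho(\mathcal{Q}(\mathcal{H}))\geq d_{1}$; (2) $\rho(\mathcal{Q}(\mathcal{H}))\leq d_{1}+d_{1}^{\frac{1}{k}}d_{2}^{1-\frac{1}{k}}$, with equality if and only if $\mathcal{H}$ is a regular hypergraph.
   Context: A $k$-uniform hypergraph $\mathcal{H}$ on vertex set $[n]$ has edges that are $k$-element subsets of $[n]$; $d_i$ is the number of edges containing vertex $i$, and $\mathcal{H}$ is regular if all $d_i$ are equal. The adjacency tensor $\mathcal{A}(\mathcal{H})$ is the order-$k$, dimension-$n$ tensor with $\mathcal{A}_{i_1\cdots i_k}=\frac{1}{(k-1)!}$ if $\{i_1,\dots,i_k\}\in E(\mathcal{H})$ and $0$ otherwise. $\mathcal{D}(\mathcal{H})$ is the order-$k$ dimension-$n$ diagonal tensor with $\mathcal{D}_{i\cdots i}=d_i$, and $\mathcal{Q}(\mathcal{H})=\mathcal{D}(\mathcal{H})+\mathcal{A}(\mathcal{H})$ is the signless Laplacian tensor. For a tensor $\mathcal{T}$ and $x\in\mathbb{C}^n$, $(\mathcal{T}x)_i=\sum_{i_2,\dots,i_k}\mathcal{T}_{ii_2\cdots i_k}x_{i_2}\cdots x_{i_k}$; $\lambda$ is an eigenvalue if $\mathcal{T}x=\lambda x^{[k-1]}$ for some nonzero $x\in\mathbb{C}^n$, where $x^{[k-1]}=(x_1^{k-1},\dots,x_n^{k-1})^T$;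 $\rho(\mathcal{T})$ is the maximum modulus of eigenvalues. *)

theory Defs
  imports Complex_Main
begin

definition uniform_hypergraph :: "nat \<Rightarrow> nat \<Rightarrow> nat set set \<Rightarrow> bool" where
  "uniform_hypergraph n k E \<longleftrightarrow> (\<forall>e\<in>E. e \<subseteq> {1..n} \<and> card e = k)"

definition hdeg :: "nat set set \<Rightarrow> nat \<Rightarrow> nat" where
  "hdeg E i = card {e\<in>E. i \<in> e}"

text \<open>Degree sequence sorted non-increasingly: d_1 >= ... >= d_n; d_i = deg_seq n E ! (i-1).\<close>
definition deg_seq :: "nat \<Rightarrow> nat set set \<Rightarrow> nat list" where
  "deg_seq n E = rev (sort (map (hdeg E) [1..<n+1]))"

definition hconnected :: "nat \<Rightarrow> nat set set \<Rightarrow> bool" where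
  "hconnected n E \<longleftrightarrow>
     (\<forall>u\<in>{1..n}. \<forall>v\<in>{1..n}. (u, v) \<in> {(a, b). \<exists>e\<in>E. a \<in> e \<and> b \<in> e}\<^sup>*)"

definition hregular :: "nat \<Rightarrow> nat set set \<Rightarrow> bool" where
  "hregular n E \<longleftrightarrow> (\<forall>i\<in>{1..n}. \<forall>j\<in>{1..n}. hdeg E i = hdeg E j)"

text \<open>Order-k, dimension-n tensors: functions on index lists of length k with entries in {1..n}.\<close>
type_synonym tensor = "nat list \<Rightarrow> real"

definition adj_tensor :: "nat \<Rightarrow> nat set set \<Rightarrow> tensor" where
  "adj_tensor k E = (\<lambda>is. if set is \<in> E then 1 / fact (k - 1) else 0)"

definition deg_tensor :: "nat set set \<Rightarrow> tensor" where
  "deg_tensor E = (\<lambda>is. if is \<noteq> [] \<and> (\<forall>j\<in>set is. j = hd is) then real (hdeg E (hd is)) else 0)"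

definition signless_laplacian :: "nat \<Rightarrow> nat set set \<Rightarrow> tensor" where
  "signless_laplacian k E = (\<lambda>is. deg_tensor E is + adj_tensor k E is)"

definition tensor_apply :: "nat \<Rightarrow> nat \<Rightarrow> tensor \<Rightarrow> (nat \<Rightarrow> complex) \<Rightarrow> nat \<Rightarrow> complex" where
  "tensor_apply n k T x i =
     (\<Sum>is\<in>{is. length is = k - 1 \<and> set is \<subseteq> {1..n}}.
        complex_of_real (T (i # is)) * (\<Prod>j\<leftarrow>is. x j))"

definition tensor_eigenvalue :: "nat \<Rightarrow> nat \<Rightarrow> tensor \<Rightarrow> complex \<Rightarrow> bool" where
  "tensor_eigenvalue n k T lam \<longleftrightarrow>
     (\<exists>x :: nat \<Rightarrow> complex. (\<exists>i\<in>{1..n}. x i \<noteq> 0) \<and>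
        (\<forall>i\<in>{1..n}. tensor_apply n k T x i = lam * x i ^ (k - 1)))"

definition spectral_radius :: "nat \<Rightarrow> nat \<Rightarrow> tensor \<Rightarrow> real" where
  "spectral_radius n k T = Sup (cmod ` {lam. tensor_eigenvalue n k T lam})"

end

theory Submission
  imports Defs "HOL-Analysis.Analysis" "HOL-Combinatorics.Multiset_Permutations"
begin


lemma compact_Pi_fun:
  fixes C :: "'i \<Rightarrow> 'a::topological_space set"
  assumes "\<And>i. compact (C i)"
  shows "compact (Pi\<^sub>E UNIV C)"
proof -
  have "compactin (product_topology (\<lambda>i. euclidean) UNIV) (Pi\<^sub>E UNIV C)"
    by (rule iffD2[OF compactin_PiE]) (use assms in auto)
  thus ?thesis by (metis euclidean_product_topology compactin_euclidean_iff)
qed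
lemma seq_compact_fun:
  fixes C :: "nat \<Rightarrow> 'a::first_countable_topology set" and f :: "nat \<Rightarrow> nat \<Rightarrow> 'a"
  assumes "\<And>i. compact (C i)" "\<And>m. f m \<in> Pi\<^sub>E UNIV C"
  shows "\<exists>l r. l \<in> Pi\<^sub>E UNIV C \<and> strict_mono r \<and> (\<forall>i. ((\<lambda>m. f (r m) i) \<longlongrightarrow> l i) sequentially)"
proof -
  have "seq_compact (Pi\<^sub>E UNIV C)" by (rule compact_imp_seq_compact[OF compact_Pi_fun[OF assms(1)]])
  then obtain l r where l: "l \<in> Pi\<^sub>E UNIV C" "strict_mono r" "(f \<circ> r) \<longlonglongrightarrow> l"
    using \<open>seq_compact _\<close>[unfolded seq_compact_def, rule_format, of f] assms(2) by blast
  have "((\<lambda>m. f (r m) i) \<longlongrightarrow> l i) sequentially" for i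
    using continuous_on_tendsto_compose[OF continuous_on_product_coordinates[of i] l(3)] by (simp add: o_def)
  thus ?thesis using l by blast
qed


lemma lists_finite: "finite {xs :: nat list. length xs = m \<and> set xs \<subseteq> {1..n}}"
  using finite_lists_length_eq[of "{1..n}" m] by (simp add: conj_commute)

lemma deg_part:
  assumes i: "i \<in> {1..n}"
  shows "(\<Sum>xs\<in>{xs. length xs = m \<and> set xs \<subseteq> {1..n}}.
        complex_of_real (deg_tensor E (i # xs)) * (\<Prod>j\<leftarrow>xs. x j)) = of_nat (hdeg E i) * x i ^ m"
proof -
  let ?I = "{xs :: nat list. length xs = m \<and> set xs \<subseteq> {1..n}}"
  have "(\<Sum>xs\<in>?I. complex_of_real (deg_tensor E (i # xs)) * (\<Prod>j\<leftarrow>xs. x j))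
      = (\<Sum>xs\<in>?I. if xs = replicate m i then of_nat (hdeg E i) * x i ^ m else 0)"
  proof (rule sum.cong[OF refl])
    fix xs assume "xs \<in> ?I"
    hence l: "length xs = m" by auto
    have eq0: "(\<forall>j\<in>set xs. j = i) \<longleftrightarrow> xs = replicate m i"
    proof
      assume "\<forall>j\<in>set xs. j = i" thus "xs = replicate m i" using replicate_length_same[of xs i] l by simp
    next
      assume "xs = replicate m i" thus "\<forall>j\<in>set xs. j = i" by simp
    qed
    have eq: "(\<forall>j\<in>set (i # xs). j = hd (i # xs)) \<longleftrightarrow> xs = replicate m i"
      using eq0 by simp
    show "complex_of_real (deg_tensor E (i # xs)) * (\<Prod>j\<leftarrow>xs. x j)
      = (if xs = replicate m i then of_nat (hdeg E i) * x i ^ m else 0)"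
      unfolding deg_tensor_def using eq by (auto simp: prod_list_replicate)
  qed
  also have "\<dots> = of_nat (hdeg E i) * x i ^ m"
    using i lists_finite[of m n] by (simp add: sum.delta' set_replicate_conv_if)
  finally show ?thesis .
qed

lemma adj_part:
  assumes k: "k \<ge> 1" and U: "uniform_hypergraph n k E" and i: "i \<in> {1..n}"
  shows "(\<Sum>xs\<in>{xs. length xs = k - 1 \<and> set xs \<subseteq> {1..n}}.
        complex_of_real (adj_tensor k E (i # xs)) * (\<Prod>j\<leftarrow>xs. x j))
       = (\<Sum>e\<in>{e\<in>E. i \<in> e}. \<Prod>j\<in>e - {i}. x j)"
proof -
  let ?I = "{xs :: nat list. length xs = k - 1 \<and> set xs \<subseteq> {1..n}}"
  let ?J = "{xs \<in> ?I. insert i (set xs) \<in> E}"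
  have fI: "finite ?I" by (rule lists_finite)
  let ?c = "complex_of_real (1 / fact (k - 1))"
  have finE: "finite E"
  proof (rule finite_subset[of E "Pow {1..n}"])
    show "E \<subseteq> Pow {1..n}" using U unfolding uniform_hypergraph_def by auto
  qed auto
  have "(\<Sum>xs\<in>?I. complex_of_real (adj_tensor k E (i # xs)) * (\<Prod>j\<leftarrow>xs. x j))
      = (\<Sum>xs\<in>?I. if insert i (set xs) \<in> E then ?c * (\<Prod>j\<leftarrow>xs. x j) else 0)"
    unfolding adj_tensor_def by (intro sum.cong) auto
  also have "\<dots> = (\<Sum>xs\<in>?J. ?c * (\<Prod>j\<leftarrow>xs. x j))"
    by (subst sum.inter_filter[symmetric]) (use fI in auto)
  also have "?J = (\<Union>e\<in>{e\<in>E. i \<in> e}. permutations_of_set (e - {i}))"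
  proof (intro equalityI subsetI)
    fix xs assume "xs \<in> ?J"
    hence l: "length xs = k - 1" and s: "set xs \<subseteq> {1..n}" and e: "insert i (set xs) \<in> E" by auto
    have ce: "card (insert i (set xs)) = k" using U e unfolding uniform_hypergraph_def by auto
    have "card (set xs) \<le> length xs" by (rule card_length)
    moreover have "card (insert i (set xs)) \<le> Suc (card (set xs))" by (simp add: card_insert_le_m1)
    ultimately have ni: "i \<notin> set xs" and cs: "card (set xs) = length xs"
      using ce l k by (auto simp: card_insert_if split: if_splits)
    have "distinct xs" using cs by (rule card_distinct)
    moreover have "set xs = insert i (set xs) - {i}" using ni by auto
    ultimately show "xs \<in> (\<Union>e\<in>{e\<in>E. i \<in> e}. permutations_of_set (e - {i}))"
      using e by (auto simp: permutations_of_set_def)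
  next
    fix xs assume "xs \<in> (\<Union>e\<in>{e\<in>E. i \<in> e}. permutations_of_set (e - {i}))"
    then obtain e where e: "e \<in> E" "i \<in> e" and p: "set xs = e - {i}" "distinct xs"
      by (auto simp: permutations_of_set_def)
    have ce: "card e = k" and se: "e \<subseteq> {1..n}" using U e unfolding uniform_hypergraph_def by auto
    have fe: "finite e" using se finite_subset by blast
    have "length xs = card (e - {i})" using distinct_card[OF p(2)] p(1) by simp
    also have "\<dots> = k - 1" using ce e(2) fe by simp
    finally have "length xs = k - 1" .
    moreover have "insert i (set xs) = e" using p e by auto
    ultimately show "xs \<in> ?J" using se e p by auto
  qed
  also have "(\<Sum>xs\<in>(\<Union>e\<in>{e\<in>E. i \<in> e}. permutations_of_set (e - {i})). ?c * (\<Prod>j\<leftarrow>xs. x j))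
      = (\<Sum>e\<in>{e\<in>E. i \<in> e}. \<Sum>xs\<in>permutations_of_set (e - {i}). ?c * (\<Prod>j\<leftarrow>xs. x j))"
  proof (rule sum.UNION_disjoint)
    show "finite {e \<in> E. i \<in> e}" using finE by simp
    show "\<forall>e\<in>{e \<in> E. i \<in> e}. finite (permutations_of_set (e - {i}))"
      by (auto intro: finite_permutations_of_set)
    show "\<forall>e\<in>{e \<in> E. i \<in> e}. \<forall>e'\<in>{e \<in> E. i \<in> e}. e \<noteq> e' \<longrightarrow>
        permutations_of_set (e - {i}) \<inter> permutations_of_set (e' - {i}) = {}"
      by (auto simp: permutations_of_set_def)
  qed
  also have "\<dots> = (\<Sum>e\<in>{e\<in>E. i \<in> e}. \<Prod>j\<in>e - {i}. x j)"
  proof (rule sum.cong[OF refl])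
    fix e assume e: "e \<in> {e\<in>E. i \<in> e}"
    have ce: "card e = k" and se: "e \<subseteq> {1..n}" using U e unfolding uniform_hypergraph_def by auto
    have fe: "finite e" using se finite_subset by blast
    have "(\<Sum>xs\<in>permutations_of_set (e - {i}). ?c * (\<Prod>j\<leftarrow>xs. x j))
        = (\<Sum>xs\<in>permutations_of_set (e - {i}). ?c * (\<Prod>j\<in>e - {i}. x j))"
    proof (rule sum.cong[OF refl])
      fix xs assume "xs \<in> permutations_of_set (e - {i})"
      hence s: "set xs = e - {i}" and d: "distinct xs" by (auto simp: permutations_of_set_def)
      have "(\<Prod>j\<in>e - {i}. x j) = (\<Prod>j\<in>set xs. x j)" using s by simp
      also have "\<dots> = (\<Prod>j\<leftarrow>xs. x j)" using d by (rule prod.distinct_set_conv_list)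
      finally show "?c * (\<Prod>j\<leftarrow>xs. x j) = ?c * (\<Prod>j\<in>e - {i}. x j)" by simp
    qed
    also have "\<dots> = of_nat (fact (k - 1)) * (?c * (\<Prod>j\<in>e - {i}. x j))"
      using fe ce e by simp
    also have "\<dots> = (\<Prod>j\<in>e - {i}. x j)"
      by (simp add: of_real_divide field_simps)
    finally show "(\<Sum>xs\<in>permutations_of_set (e - {i}). ?c * (\<Prod>j\<leftarrow>xs. x j)) = (\<Prod>j\<in>e - {i}. x j)" .
  qed
  finally show ?thesis .
qed

lemma tensor_Q:
  assumes k: "k \<ge> 1" and U: "uniform_hypergraph n k E" and i: "i \<in> {1..n}"
  shows "tensor_apply n k (signless_laplacian k E) x i
       = of_nat (hdeg E i) * x i ^ (k - 1) + (\<Sum>e\<in>{e\<in>E. i \<in> e}. \<Prod>j\<in>e - {i}. x j)"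
  unfolding tensor_apply_def signless_laplacian_def of_real_add distrib_right sum.distrib
  using deg_part[OF i] adj_part[OF k U i] by simp



lemma finE: "uniform_hypergraph n k E \<Longrightarrow> finite E"
  by (rule finite_subset[of E "Pow {1..n}"]) (auto simp: uniform_hypergraph_def)

lemma edge_sub: "uniform_hypergraph n k E \<Longrightarrow> e \<in> E \<Longrightarrow> e \<subseteq> {1..n}"
  by (auto simp: uniform_hypergraph_def)

lemma edge_card: "uniform_hypergraph n k E \<Longrightarrow> e \<in> E \<Longrightarrow> card e = k"
  by (auto simp: uniform_hypergraph_def)

lemma edge_fin: "uniform_hypergraph n k E \<Longrightarrow> e \<in> E \<Longrightarrow> finite e"
  using edge_sub[of n k E e] by (metis finite_atLeastAtMost finite_subset)

lemma hdeg_pos: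
  assumes "n \<ge> 2" "uniform_hypergraph n k E" "hconnected n E" "i \<in> {1..n}"
  shows "hdeg E i \<ge> 1"
proof -
  obtain j where j: "j \<in> {1..n}" "j \<noteq> i"
  proof (cases "i = 1")
    case True thus ?thesis using that[of 2] assms by auto
  next
    case False thus ?thesis using that[of 1] assms by auto
  qed
  have "(i, j) \<in> {(a, b). \<exists>e\<in>E. a \<in> e \<and> b \<in> e}\<^sup>*"
    using assms(3,4) j unfolding hconnected_def by blast
  then obtain e where e: "e \<in> E" "i \<in> e"
    using j(2) by (cases rule: converse_rtranclE) auto
  have "finite {e\<in>E. i \<in> e}" using finE[OF assms(2)] by simp
  moreover have "{e\<in>E. i \<in> e} \<noteq> {}" using e by auto
  ultimately show ?thesis unfolding hdeg_def by (simp add: Suc_le_eq card_gt_0_iff)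
qed

lemma deg_seq_facts:
  assumes n: "n \<ge> 2"
  shows "\<exists>v\<in>{1..n}. hdeg E v = deg_seq n E ! 0 \<and> (\<forall>i\<in>{1..n}. hdeg E i \<le> hdeg E v)
          \<and> (\<forall>p\<in>{1..n}. p \<noteq> v \<longrightarrow> hdeg E p \<le> deg_seq n E ! 1)"
    and "\<exists>q\<in>{1..n}. hdeg E q = deg_seq n E ! 1"
proof -
  define L where "L = map (hdeg E) [1..<n+1]"
  define s where "s = sort L"
  have ls: "length s = n" unfolding s_def L_def by simp
  have ss: "set s = hdeg E ` {1..n}" unfolding s_def L_def by auto
  have so: "sorted s" unfolding s_def by simp
  have d0: "deg_seq n E ! 0 = s ! (n - 1)" unfolding deg_seq_def s_def[symmetric] L_def[symmetric]
    using n ls by (simp add: rev_nth)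
  have d1: "deg_seq n E ! 1 = s ! (n - 2)" unfolding deg_seq_def s_def[symmetric] L_def[symmetric]
    using n ls by (simp add: rev_nth numeral_2_eq_2)
  have "s ! (n - 1) \<in> set s" using n ls by simp
  then obtain v where v: "v \<in> {1..n}" "hdeg E v = s ! (n - 1)" using ss by auto
  have vmax: "hdeg E i \<le> hdeg E v" if "i \<in> {1..n}" for i
  proof -
    have "hdeg E i \<in> set s" using ss that by auto
    then obtain j where "j < n" "s ! j = hdeg E i" using ls by (auto simp: in_set_conv_nth)
    moreover have "s ! j \<le> s ! (n - 1)" if "j < n" for j
      using so ls that n by (intro sorted_nth_mono) auto
    ultimately show ?thesis using v by metis
  qed
  have second: "hdeg E p \<le> s ! (n - 2)" if p: "p \<in> {1..n}" "p \<noteq> v" for p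
  proof (rule ccontr)
    assume "\<not> ?thesis"
    hence gp: "hdeg E p > s ! (n - 2)" by simp
    hence gv: "hdeg E v > s ! (n - 2)" using vmax[OF p(1)] by simp
    define P where "P = (\<lambda>x. x > s ! (n - 2))"
    have "length (filter P s) = card {j. j < length s \<and> P (s ! j)}" by (rule length_filter_conv_card)
    also have "{j. j < length s \<and> P (s ! j)} \<subseteq> {n - 1}"
    proof
      fix j assume j: "j \<in> {j. j < length s \<and> P (s ! j)}"
      { assume "j \<le> n - 2"
        hence "s ! j \<le> s ! (n - 2)" using so ls n by (intro sorted_nth_mono) auto
        hence False using j unfolding P_def by auto }
      thus "j \<in> {n - 1}" using j ls by fastforce
    qed
    hence "card {j. j < length s \<and> P (s ! j)} \<le> card {n - 1}" by (intro card_mono) auto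
    finally have le1: "length (filter P s) \<le> 1" by simp
    have "length (filter P s) = length (filter P L)"
      unfolding s_def by (metis mset_filter mset_sort size_mset)
    also have "\<dots> = length (filter (P \<circ> hdeg E) [1..<n+1])" unfolding L_def by (simp add: filter_map)
    also have "\<dots> = card (set (filter (P \<circ> hdeg E) [1..<n+1]))"
      by (rule distinct_card[symmetric]) simp
    also have "set (filter (P \<circ> hdeg E) [1..<n+1]) = {i\<in>{1..n}. P (hdeg E i)}" by auto
    finally have "card {i\<in>{1..n}. P (hdeg E i)} \<le> 1" using le1 by simp
    moreover have "{p, v} \<subseteq> {i\<in>{1..n}. P (hdeg E i)}" using p v gp gv unfolding P_def by auto
    hence "card {p, v} \<le> card {i\<in>{1..n}. P (hdeg E i)}" by (intro card_mono) auto
    ultimately show False using p(2) by simp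
  qed
  show "\<exists>v\<in>{1..n}. hdeg E v = deg_seq n E ! 0 \<and> (\<forall>i\<in>{1..n}. hdeg E i \<le> hdeg E v)
          \<and> (\<forall>p\<in>{1..n}. p \<noteq> v \<longrightarrow> hdeg E p \<le> deg_seq n E ! 1)"
    using v vmax second d0 d1 by auto
  have "s ! (n - 2) \<in> set s" using n ls by simp
  thus "\<exists>q\<in>{1..n}. hdeg E q = deg_seq n E ! 1" using ss d1 by auto
qed



lemma eig_ineq:
  assumes k: "k \<ge> 1" and U: "uniform_hypergraph n k E" and i: "i \<in> {1..n}"
    and eq: "tensor_apply n k (signless_laplacian k E) x i = lam * x i ^ (k - 1)"
  shows "cmod lam * cmod (x i) ^ (k - 1) \<le> real (hdeg E i) * cmod (x i) ^ (k - 1)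
           + (\<Sum>e\<in>{e\<in>E. i \<in> e}. \<Prod>j\<in>e - {i}. cmod (x j))"
proof -
  let ?S = "\<Sum>e\<in>{e\<in>E. i \<in> e}. \<Prod>j\<in>e - {i}. x j"
  have "lam * x i ^ (k - 1) = of_nat (hdeg E i) * x i ^ (k - 1) + ?S"
    using eq tensor_Q[OF k U i, of x] by simp
  hence h: "(lam - of_nat (hdeg E i)) * x i ^ (k - 1) = ?S" by (simp add: algebra_simps)
  have "cmod (lam - of_nat (hdeg E i)) * cmod (x i) ^ (k - 1) = cmod ((lam - of_nat (hdeg E i)) * x i ^ (k - 1))"
    by (simp add: norm_mult norm_power)
  also have "\<dots> = cmod ?S"
    using h by simp
  also have "\<dots> \<le> (\<Sum>e\<in>{e\<in>E. i \<in> e}. cmod (\<Prod>j\<in>e - {i}. x j))" by (rule norm_sum)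
  also have "\<dots> = (\<Sum>e\<in>{e\<in>E. i \<in> e}. \<Prod>j\<in>e - {i}. cmod (x j))" by (simp add: prod_norm)
  finally have A: "cmod (lam - of_nat (hdeg E i)) * cmod (x i) ^ (k - 1)
      \<le> (\<Sum>e\<in>{e\<in>E. i \<in> e}. \<Prod>j\<in>e - {i}. cmod (x j))" .
  have "cmod lam \<le> cmod (lam - of_nat (hdeg E i)) + real (hdeg E i)"
    using norm_triangle_ineq[of "lam - of_nat (hdeg E i)" "of_nat (hdeg E i)"] by simp
  hence "cmod lam * cmod (x i) ^ (k - 1) \<le> (cmod (lam - of_nat (hdeg E i)) + real (hdeg E i)) * cmod (x i) ^ (k - 1)"
    by (intro mult_right_mono) auto
  thus ?thesis using A by (simp add: algebra_simps)
qed

lemma prod_lt_pow: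
  fixes f :: "nat \<Rightarrow> real"
  assumes "finite S" "j0 \<in> S" "\<And>j. j \<in> S \<Longrightarrow> 0 \<le> f j \<and> f j \<le> M" "f j0 < M"
  shows "prod f S < M ^ card S"
proof -
  have M: "M > 0" using assms(3)[OF assms(2)] assms(4) by linarith
  have "prod f S = f j0 * prod f (S - {j0})" using assms(1,2) by (rule prod.remove)
  also have "prod f (S - {j0}) \<le> (\<Prod>j\<in>S - {j0}. M)" by (intro prod_mono) (use assms in auto)
  hence "f j0 * prod f (S - {j0}) \<le> f j0 * M ^ card (S - {j0})" using assms by (intro mult_left_mono) auto
  also have "\<dots> < M * M ^ card (S - {j0})" using assms M by (intro mult_strict_right_mono) auto
  also have "\<dots> = M ^ card S" using assms(1,2)
    using card.remove[OF assms(1,2)] by (metis power_Suc)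
  finally show ?thesis .
qed

lemma prod_le_pow:
  fixes f :: "nat \<Rightarrow> real"
  assumes "\<And>j. j \<in> S \<Longrightarrow> 0 \<le> f j \<and> f j \<le> M"
  shows "prod f S \<le> M ^ card S"
proof -
  have "prod f S \<le> (\<Prod>j\<in>S. M)" by (intro prod_mono) (use assms in auto)
  thus ?thesis by simp
qed

lemma weighted:
  fixes y w :: "nat \<Rightarrow> real"
  assumes k: "k \<ge> 1" and U: "uniform_hypergraph n k E" and p: "p \<in> {1..n}"
    and y0: "\<And>i. i \<in> {1..n} \<Longrightarrow> 0 \<le> y i" and w0: "\<And>i. i \<in> {1..n} \<Longrightarrow> w i > 0"
    and yM: "\<And>i. i \<in> {1..n} \<Longrightarrow> y i / w i \<le> M" and yp: "y p = w p * M" and M: "M > 0"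
    and ineq: "t * y p ^ (k - 1) \<le> d * y p ^ (k - 1) + (\<Sum>e\<in>{e\<in>E. p \<in> e}. \<Prod>j\<in>e - {p}. y j)"
  shows "t * w p ^ (k - 1) \<le> d * w p ^ (k - 1) + (\<Sum>e\<in>{e\<in>E. p \<in> e}. \<Prod>j\<in>e - {p}. w j)"
proof -
  have "(\<Sum>e\<in>{e\<in>E. p \<in> e}. \<Prod>j\<in>e - {p}. y j) \<le> (\<Sum>e\<in>{e\<in>E. p \<in> e}. M ^ (k - 1) * (\<Prod>j\<in>e - {p}. w j))"
  proof (rule sum_mono)
    fix e assume e: "e \<in> {e\<in>E. p \<in> e}"
    have se: "e \<subseteq> {1..n}" and ce: "card e = k" and fe: "finite e"
      using e edge_sub[OF U] edge_card[OF U] edge_fin[OF U] by auto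
    have "(\<Prod>j\<in>e - {p}. y j) \<le> (\<Prod>j\<in>e - {p}. M * w j)"
    proof (rule prod_mono)
      fix j assume "j \<in> e - {p}"
      hence j: "j \<in> {1..n}" using se by auto
      show "0 \<le> y j \<and> y j \<le> M * w j" using y0[OF j] yM[OF j] w0[OF j]
        by (simp add: divide_le_eq mult.commute)
    qed
    also have "\<dots> = M ^ card (e - {p}) * (\<Prod>j\<in>e - {p}. w j)" by (simp add: prod.distrib)
    also have "card (e - {p}) = k - 1" using ce e fe by simp
    finally show "(\<Prod>j\<in>e - {p}. y j) \<le> M ^ (k - 1) * (\<Prod>j\<in>e - {p}. w j)" .
  qed
  also have "\<dots> = M ^ (k - 1) * (\<Sum>e\<in>{e\<in>E. p \<in> e}. \<Prod>j\<in>e - {p}. w j)" by (simp add: sum_distrib_left)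
  finally have "t * (M ^ (k - 1) * w p ^ (k - 1)) \<le> M ^ (k - 1) * (d * w p ^ (k - 1) + (\<Sum>e\<in>{e\<in>E. p \<in> e}. \<Prod>j\<in>e - {p}. w j))"
    using ineq unfolding yp by (simp add: power_mult_distrib algebra_simps)
  moreover have "M ^ (k - 1) > 0" using M by simp
  ultimately show ?thesis by (simp add: mult.left_commute[of t] mult_le_cancel_left_pos)
qed



lemma root_pow:
  fixes D :: real
  assumes "k \<ge> 1" "D > 0"
  shows "(D powr (1 / real k)) ^ m = D powr (real m / real k)"
proof -
  have "(D powr (1 / real k)) ^ m = (D powr (1 / real k)) powr real m"
    using assms by (simp add: powr_realpow)
  also have "\<dots> = D powr (real m / real k)" by (simp add: powr_powr)
  finally show ?thesis .
qed

lemma root_facts: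
  fixes D :: real
  assumes k: "k \<ge> 1" and D: "D > 0"
  shows "(D powr (1 / real k)) ^ k = D" "(D powr (1 / real k)) ^ (k - 1) = D powr (1 - 1 / real k)"
    "D powr (1 / real k) > 0"
proof -
  show "(D powr (1 / real k)) ^ k = D" using root_pow[OF assms, of k] k D by simp
  have "real (k - 1) / real k = 1 - 1 / real k" using k by (simp add: of_nat_diff field_simps)
  thus "(D powr (1 / real k)) ^ (k - 1) = D powr (1 - 1 / real k)" using root_pow[OF assms, of "k - 1"] by simp
  show "D powr (1 / real k) > 0" using D by simp
qed



lemma ex_max_on:
  fixes u :: "nat \<Rightarrow> real"
  assumes "n \<ge> 1"
  obtains p where "p \<in> {1..n}" "\<And>i. i \<in> {1..n} \<Longrightarrow> u i \<le> u p"
proof -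
  have "Max (u ` {1..n}) \<in> u ` {1..n}" using assms by (intro Max_in) auto
  then obtain p where p: "p \<in> {1..n}" "u p = Max (u ` {1..n})" by auto
  have "u i \<le> u p" if "i \<in> {1..n}" for i using p that by simp
  thus ?thesis using that p by blast
qed

lemma card_star: "card {e\<in>E. i \<in> e} = hdeg E i" by (simp add: hdeg_def)

lemma eig_bound:
  fixes x :: "nat \<Rightarrow> complex"
  assumes k: "k \<ge> 2" and n: "n \<ge> 2" and U: "uniform_hypergraph n k E"
    and v: "v \<in> {1..n}" and vmax: "\<And>i. i \<in> {1..n} \<Longrightarrow> hdeg E i \<le> hdeg E v"
    and sec: "\<And>p. p \<in> {1..n} \<Longrightarrow> p \<noteq> v \<Longrightarrow> real (hdeg E p) \<le> D2"
    and D2pos: "D2 \<ge> 1" and D21: "D2 \<le> real (hdeg E v)"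
    and xne: "\<exists>i\<in>{1..n}. x i \<noteq> 0"
    and eig: "\<And>i. i \<in> {1..n} \<Longrightarrow> tensor_apply n k (signless_laplacian k E) x i = lam * x i ^ (k - 1)"
  shows "cmod lam \<le> real (hdeg E v) + real (hdeg E v) powr (1 / real k) * D2 powr (1 - 1 / real k)"
    and "cmod lam = real (hdeg E v) + real (hdeg E v) powr (1 / real k) * D2 powr (1 - 1 / real k)
          \<Longrightarrow> real (hdeg E v) = D2"
proof -
  define D1 where "D1 = real (hdeg E v)"
  have k1: "k \<ge> 1" using k by simp
  have D1pos: "D1 > 0" using D2pos D21 unfolding D1_def by simp
  define a where "a = D1 powr (1 / real k)"
  define b where "b = D2 powr (1 / real k)"
  have a0: "a > 0" and ak: "a ^ k = D1" and ak1: "a ^ (k - 1) = D1 powr (1 - 1 / real k)"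
    using root_facts[OF k1 D1pos] unfolding a_def by auto
  have b0: "b > 0" and bk: "b ^ k = D2" and bk1: "b ^ (k - 1) = D2 powr (1 - 1 / real k)"
    using root_facts[OF k1, of D2] D2pos unfolding b_def by auto
  define c where "c = a * b ^ (k - 1)"
  have cdef: "D1 powr (1 / real k) * D2 powr (1 - 1 / real k) = c" unfolding c_def a_def bk1[symmetric] ..
  obtain k' where kk: "k = Suc k'" using k by (cases k) auto
  have ba: "b \<le> a"
  proof -
    have "b ^ Suc k' \<le> a ^ Suc k'" using ak bk D21 unfolding D1_def kk by simp
    thus ?thesis by (rule power_le_imp_le_base) (use a0 in simp)
  qed
  define \<alpha> where "\<alpha> = a / b"
  have \<alpha>1: "\<alpha> \<ge> 1" unfolding \<alpha>_def using ba b0 by simp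
  have \<alpha>0: "\<alpha> > 0" using \<alpha>1 by simp
  have D2\<alpha>: "D2 * \<alpha> = c"
  proof -
    have "D2 = b * b ^ (k - 1)" using bk unfolding kk by simp
    thus ?thesis unfolding \<alpha>_def c_def using b0 by (simp add: field_simps)
  qed
  have D1\<alpha>: "c * \<alpha> ^ (k - 1) = D1"
  proof -
    have "D1 = a * a ^ (k - 1)" using ak unfolding kk by simp
    thus ?thesis unfolding \<alpha>_def c_def using b0 by (simp add: field_simps power_divide)
  qed
  define w where "w = (\<lambda>i. if i = v then \<alpha> else 1::real)"
  define y where "y = (\<lambda>i. cmod (x i))"
  define u where "u = (\<lambda>i. y i / w i)"
  define t where "t = cmod lam"
  have w0: "w i > 0" for i unfolding w_def using \<alpha>0 by simp
  have y0: "y i \<ge> 0" for i unfolding y_def by simp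
  obtain p0 where p0: "p0 \<in> {1..n}" and p0max: "\<And>i. i \<in> {1..n} \<Longrightarrow> u i \<le> u p0"
    using ex_max_on[of n u] n by auto
  define M where "M = u p0"
  have uM: "u i \<le> M" if "i \<in> {1..n}" for i using p0max that unfolding M_def by simp
  have M0: "M > 0"
  proof -
    obtain i where i: "i \<in> {1..n}" "x i \<noteq> 0" using xne by auto
    have "u i > 0" unfolding u_def y_def using i w0[of i] by simp
    thus ?thesis using uM[OF i(1)] by simp
  qed
  have R: "t * y i ^ (k - 1) \<le> real (hdeg E i) * y i ^ (k - 1) + (\<Sum>e\<in>{e\<in>E. i \<in> e}. \<Prod>j\<in>e - {i}. y j)"
    if "i \<in> {1..n}" for i
    using eig_ineq[OF k1 U that eig[OF that]] unfolding t_def y_def .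
  have yMw: "y p = w p * M" if "u p = M" for p using that w0[of p] unfolding u_def by (simp add: field_simps)
  have claimA: "t \<le> D2 + c" if p: "p \<in> {1..n}" "p \<noteq> v" "u p = M" for p
  proof -
    have W: "t * w p ^ (k - 1) \<le> real (hdeg E p) * w p ^ (k - 1) + (\<Sum>e\<in>{e\<in>E. p \<in> e}. \<Prod>j\<in>e - {p}. w j)"
    proof (rule weighted[of k n E p y w M t "real (hdeg E p)", OF k1 U p(1)])
      show "\<And>i. i \<in> {1..n} \<Longrightarrow> 0 \<le> y i" using y0 by simp
      show "\<And>i. i \<in> {1..n} \<Longrightarrow> 0 < w i" using w0 by simp
      show "\<And>i. i \<in> {1..n} \<Longrightarrow> y i / w i \<le> M" using uM unfolding u_def by simp
    qed (rule yMw[OF p(3)], rule M0, rule R[OF p(1)])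
    have wp: "w p = 1" using p unfolding w_def by simp
    have "(\<Sum>e\<in>{e\<in>E. p \<in> e}. \<Prod>j\<in>e - {p}. w j) \<le> (\<Sum>e\<in>{e\<in>E. p \<in> e}. \<alpha>)"
    proof (rule sum_mono)
      fix e assume e: "e \<in> {e\<in>E. p \<in> e}"
      have fe: "finite (e - {p})" using edge_fin[OF U] e by auto
      have "(\<Prod>j\<in>e - {p}. w j) = (if v \<in> e - {p} then \<alpha> else 1)"
        unfolding w_def using prod.delta[OF fe, of v "\<lambda>_. \<alpha>"] by simp
      thus "(\<Prod>j\<in>e - {p}. w j) \<le> \<alpha>" using \<alpha>1 by simp
    qed
    also have "\<dots> = real (hdeg E p) * \<alpha>" by (simp add: card_star)
    finally have "t \<le> real (hdeg E p) * (1 + \<alpha>)" using W wp by (simp add: algebra_simps)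
    also have "\<dots> \<le> D2 * (1 + \<alpha>)" using sec[OF p(1,2)] \<alpha>0 by (intro mult_right_mono) auto
    finally show ?thesis using D2\<alpha> by (simp add: algebra_simps)
  qed
  have D2D1: "D2 \<le> D1" using D21 unfolding D1_def .
  have claimB1: "t \<le> D1 + c" if pv: "u v = M"
  proof -
    have W: "t * w v ^ (k - 1) \<le> real (hdeg E v) * w v ^ (k - 1) + (\<Sum>e\<in>{e\<in>E. v \<in> e}. \<Prod>j\<in>e - {v}. w j)"
    proof (rule weighted[of k n E v y w M t "real (hdeg E v)", OF k1 U v])
      show "\<And>i. i \<in> {1..n} \<Longrightarrow> 0 \<le> y i" using y0 by simp
      show "\<And>i. i \<in> {1..n} \<Longrightarrow> 0 < w i" using w0 by simp
      show "\<And>i. i \<in> {1..n} \<Longrightarrow> y i / w i \<le> M" using uM unfolding u_def by simp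
    qed (rule yMw[OF pv], rule M0, rule R[OF v])
    have "(\<Sum>e\<in>{e\<in>E. v \<in> e}. \<Prod>j\<in>e - {v}. w j) = (\<Sum>e\<in>{e\<in>E. v \<in> e}. 1)"
      by (intro sum.cong refl prod.neutral) (auto simp: w_def)
    also have "\<dots> = D1" by (simp add: card_star D1_def)
    finally have "t * \<alpha> ^ (k - 1) \<le> (D1 + c) * \<alpha> ^ (k - 1)"
      using W D1\<alpha> unfolding w_def D1_def by (simp add: algebra_simps)
    thus ?thesis using \<alpha>0 by (simp add: mult_le_cancel_right_pos)
  qed
  have claimB2: "\<exists>j\<in>{1..n}. j \<noteq> v \<and> u j = M" if pv: "u v = M" and teq: "t = D1 + c"
  proof (rule ccontr)
    assume na: "\<not> ?thesis"
    have lt: "y j < M" if "j \<in> {1..n}" "j \<noteq> v" for j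
    proof -
      have "u j \<noteq> M" using na that by blast
      hence "u j < M" using uM[OF that(1)] by simp
      thus ?thesis using that unfolding u_def w_def by simp
    qed
    have yv: "y v = \<alpha> * M" using yMw[OF pv] unfolding w_def by simp
    have "(\<Sum>e\<in>{e\<in>E. v \<in> e}. \<Prod>j\<in>e - {v}. y j) < (\<Sum>e\<in>{e\<in>E. v \<in> e}. M ^ (k - 1))"
    proof (rule sum_strict_mono)
      show "finite {e\<in>E. v \<in> e}" using finE[OF U] by simp
      have "hdeg E v \<ge> 1" using D2pos D21 by simp
      thus "{e\<in>E. v \<in> e} \<noteq> {}" unfolding hdeg_def by (intro notI) simp
      fix e assume e: "e \<in> {e\<in>E. v \<in> e}"
      have fe: "finite e" and ce: "card e = k" and se: "e \<subseteq> {1..n}"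
        using e edge_fin[OF U] edge_card[OF U] edge_sub[OF U] by auto
      have c1: "card (e - {v}) = k - 1" using fe ce e by simp
      hence "e - {v} \<noteq> {}" using k by (intro notI) simp
      then obtain j0 where j0: "j0 \<in> e - {v}" by blast
      have "(\<Prod>j\<in>e - {v}. y j) < M ^ card (e - {v})"
      proof (rule prod_lt_pow[OF _ j0])
        show "finite (e - {v})" using fe by simp
        show "0 \<le> y j \<and> y j \<le> M" if "j \<in> e - {v}" for j
        proof -
          have "j \<in> {1..n}" "j \<noteq> v" using that se by auto
          thus ?thesis using y0[of j] lt[of j] by (simp add: less_imp_le)
        qed
        show "y j0 < M" using lt[of j0] j0 se by auto
      qed
      thus "(\<Prod>j\<in>e - {v}. y j) < M ^ (k - 1)" using c1 by simp
    qed
    also have "\<dots> = D1 * M ^ (k - 1)" by (simp add: card_star D1_def)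
    finally have "t * y v ^ (k - 1) < D1 * y v ^ (k - 1) + D1 * M ^ (k - 1)"
      using R[OF v] unfolding D1_def by simp
    moreover have "t * y v ^ (k - 1) = D1 * y v ^ (k - 1) + D1 * M ^ (k - 1)"
      unfolding teq yv power_mult_distrib using D1\<alpha>[symmetric] by (simp add: algebra_simps)
    ultimately show False by simp
  qed
  show "cmod lam \<le> real (hdeg E v) + real (hdeg E v) powr (1 / real k) * D2 powr (1 - 1 / real k)"
  proof (cases "p0 = v")
    case True
    thus ?thesis using claimB1 cdef unfolding M_def t_def D1_def by simp
  next
    case False
    thus ?thesis using claimA[OF p0 False] cdef D2D1 unfolding M_def t_def D1_def by simp
  qed
  assume eq: "cmod lam = real (hdeg E v) + real (hdeg E v) powr (1 / real k) * D2 powr (1 - 1 / real k)"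
  hence teq: "t = D1 + c" using cdef unfolding t_def D1_def by simp
  obtain j where j: "j \<in> {1..n}" "j \<noteq> v" "u j = M"
  proof (cases "p0 = v")
    case True
    thus ?thesis using claimB2[OF _ teq] that unfolding M_def by auto
  next
    case False
    thus ?thesis using that p0 unfolding M_def by auto
  qed
  have "D1 \<le> D2" using claimA[OF j] teq by simp
  thus "real (hdeg E v) = D2" using D2D1 unfolding D1_def by simp
qed



lemma reg_from_eq:
  fixes x :: "nat \<Rightarrow> complex"
  assumes k: "k \<ge> 2" and n: "n \<ge> 2" and U: "uniform_hypergraph n k E" and C: "hconnected n E"
    and v: "v \<in> {1..n}" and vmax: "\<And>i. i \<in> {1..n} \<Longrightarrow> hdeg E i \<le> hdeg E v"
    and xne: "\<exists>i\<in>{1..n}. x i \<noteq> 0"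
    and eig: "\<And>i. i \<in> {1..n} \<Longrightarrow> tensor_apply n k (signless_laplacian k E) x i = lam * x i ^ (k - 1)"
    and teq: "cmod lam = 2 * real (hdeg E v)"
  shows "hregular n E"
proof -
  have k1: "k \<ge> 1" using k by simp
  define D where "D = real (hdeg E v)"
  define y where "y = (\<lambda>i. cmod (x i))"
  have y0: "y i \<ge> 0" for i unfolding y_def by simp
  obtain p0 where p0: "p0 \<in> {1..n}" and p0max: "\<And>i. i \<in> {1..n} \<Longrightarrow> y i \<le> y p0"
    using ex_max_on[of n y] n by auto
  define M where "M = y p0"
  have yM: "y i \<le> M" if "i \<in> {1..n}" for i using p0max that unfolding M_def by simp
  have M0: "M > 0"
  proof -
    obtain i where i: "i \<in> {1..n}" "x i \<noteq> 0" using xne by auto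
    have "y i > 0" unfolding y_def using i by simp
    thus ?thesis using yM[OF i(1)] by simp
  qed
  define P where "P = {i\<in>{1..n}. y i = M}"
  have R: "cmod lam * y i ^ (k - 1) \<le> real (hdeg E i) * y i ^ (k - 1) + (\<Sum>e\<in>{e\<in>E. i \<in> e}. \<Prod>j\<in>e - {i}. y j)"
    if "i \<in> {1..n}" for i
    using eig_ineq[OF k1 U that eig[OF that]] unfolding y_def .
  have key: "hdeg E p = hdeg E v \<and> (\<forall>e\<in>E. p \<in> e \<longrightarrow> e \<subseteq> P)" if pP: "p \<in> P" for p
  proof -
    have p: "p \<in> {1..n}" "y p = M" using pP unfolding P_def by auto
    have bound: "(\<Prod>j\<in>e - {p}. y j) \<le> M ^ (k - 1)" if e: "e \<in> {e\<in>E. p \<in> e}" for e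
    proof -
      have fe: "finite e" and ce: "card e = k" and se: "e \<subseteq> {1..n}"
        using e edge_fin[OF U] edge_card[OF U] edge_sub[OF U] by auto
      have "(\<Prod>j\<in>e - {p}. y j) \<le> M ^ card (e - {p})"
      proof (rule prod_le_pow)
        fix j assume "j \<in> e - {p}"
        hence "j \<in> {1..n}" using se by auto
        thus "0 \<le> y j \<and> y j \<le> M" using y0[of j] yM[of j] by simp
      qed
      thus ?thesis using fe ce e by simp
    qed
    have S: "(\<Sum>e\<in>{e\<in>E. p \<in> e}. \<Prod>j\<in>e - {p}. y j) \<le> (\<Sum>e\<in>{e\<in>E. p \<in> e}. M ^ (k - 1))"
      by (rule sum_mono) (rule bound)
    have cs: "(\<Sum>e\<in>{e\<in>E. p \<in> e}. M ^ (k - 1)) = real (hdeg E p) * M ^ (k - 1)"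
      by (simp add: card_star)
    have Mk: "M ^ (k - 1) > 0" using M0 by simp
    have S2: "(\<Sum>e\<in>{e\<in>E. p \<in> e}. \<Prod>j\<in>e - {p}. y j) \<le> real (hdeg E p) * M ^ (k - 1)"
      using S unfolding cs .
    have lamX: "cmod lam * M ^ (k - 1) = 2 * D * M ^ (k - 1)" using teq unfolding D_def by simp
    have "2 * D * M ^ (k - 1) \<le> 2 * real (hdeg E p) * M ^ (k - 1)"
      using R[OF p(1)] S2 lamX unfolding p(2) by linarith
    hence "D \<le> real (hdeg E p)" using Mk by (simp add: mult_le_cancel_right_pos)
    moreover have "real (hdeg E p) \<le> D" using vmax[OF p(1)] unfolding D_def by simp
    ultimately have dp: "real (hdeg E p) = D" by simp
    have "e \<subseteq> P" if e: "e \<in> E" "p \<in> e" for e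
    proof (rule ccontr)
      assume "\<not> e \<subseteq> P"
      then obtain j0 where j0: "j0 \<in> e" "j0 \<notin> P" by auto
      have fe: "finite e" and ce: "card e = k" and se: "e \<subseteq> {1..n}"
        using e edge_fin[OF U] edge_card[OF U] edge_sub[OF U] by auto
      have j0n: "j0 \<in> {1..n}" using j0 se by auto
      have "y j0 \<noteq> M" using j0 j0n unfolding P_def by auto
      hence yj0: "y j0 < M" using yM[OF j0n] by simp
      have j0p: "j0 \<in> e - {p}" using j0 p(2) yj0 by auto
      have "(\<Prod>j\<in>e - {p}. y j) < M ^ card (e - {p})"
      proof (rule prod_lt_pow[OF _ j0p])
        show "finite (e - {p})" using fe by simp
        show "0 \<le> y j \<and> y j \<le> M" if "j \<in> e - {p}" for j
        proof -
          have "j \<in> {1..n}" using that se by auto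
          thus ?thesis using y0[of j] yM[of j] by simp
        qed
        show "y j0 < M" by (rule yj0)
      qed
      hence lt: "(\<Prod>j\<in>e - {p}. y j) < M ^ (k - 1)" using fe ce e by simp
      have "(\<Sum>e\<in>{e\<in>E. p \<in> e}. \<Prod>j\<in>e - {p}. y j) < (\<Sum>e\<in>{e\<in>E. p \<in> e}. M ^ (k - 1))"
      proof (rule sum_strict_mono_ex1)
        show "finite {e\<in>E. p \<in> e}" using finE[OF U] by simp
        show "\<forall>e\<in>{e\<in>E. p \<in> e}. (\<Prod>j\<in>e - {p}. y j) \<le> M ^ (k - 1)" using bound by blast
        show "\<exists>e\<in>{e\<in>E. p \<in> e}. (\<Prod>j\<in>e - {p}. y j) < M ^ (k - 1)" using lt e by blast
      qed
      hence "2 * D * M ^ (k - 1) < 2 * real (hdeg E p) * M ^ (k - 1)"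
        using R[OF p(1)] lamX unfolding p(2) cs by linarith
      thus False using dp by simp
    qed
    thus ?thesis using dp unfolding D_def by simp
  qed
  have p0P: "p0 \<in> P" using p0 unfolding P_def M_def by simp
  have allP: "i \<in> P" if i: "i \<in> {1..n}" for i
  proof -
    have "(p0, i) \<in> {(a, b). \<exists>e\<in>E. a \<in> e \<and> b \<in> e}\<^sup>*"
      using C p0 i unfolding hconnected_def by blast
    thus ?thesis
    proof (induction rule: rtrancl_induct)
      case base thus ?case by (rule p0P)
    next
      case (step a b)
      then obtain e where "e \<in> E" "a \<in> e" "b \<in> e" by auto
      thus ?case using key[OF step.IH] by auto
    qed
  qed
  show ?thesis unfolding hregular_def
  proof (intro ballI)
    fix i j assume "i \<in> {1..n}" "j \<in> {1..n}"
    thus "hdeg E i = hdeg E j" using key[OF allP] by metis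
  qed
qed



lemma eig_regular:
  assumes k: "k \<ge> 2" and U: "uniform_hypergraph n k E" and R: "hregular n E" and v: "v \<in> {1..n}"
  shows "tensor_eigenvalue n k (signless_laplacian k E) (2 * of_nat (hdeg E v))"
  unfolding tensor_eigenvalue_def
proof (intro exI[of _ "\<lambda>_. 1"] conjI ballI)
  show "\<exists>i\<in>{1..n}. (1::complex) \<noteq> 0" using v by auto
  fix i assume i: "i \<in> {1..n}"
  have "hdeg E i = hdeg E v" using R i v unfolding hregular_def by blast
  thus "tensor_apply n k (signless_laplacian k E) (\<lambda>_. 1) i = 2 * of_nat (hdeg E v) * 1 ^ (k - 1)"
    using tensor_Q[OF _ U i, of "\<lambda>_. 1"] k by (simp add: card_star)
qed

lemma eig_unit:
  assumes k: "k \<ge> 3" and U: "uniform_hypergraph n k E" and v: "v \<in> {1..n}"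
  shows "tensor_eigenvalue n k (signless_laplacian k E) (of_nat (hdeg E v))"
  unfolding tensor_eigenvalue_def
proof (intro exI[of _ "\<lambda>j. if j = v then 1 else 0"] conjI ballI)
  let ?x = "\<lambda>j. if j = v then 1 else (0::complex)"
  show "\<exists>i\<in>{1..n}. ?x i \<noteq> 0" using v by auto
  fix i assume i: "i \<in> {1..n}"
  have Z: "(\<Prod>j\<in>e - {i}. ?x j) = 0" if e: "e \<in> {e\<in>E. i \<in> e}" for e
  proof -
    have fe: "finite e" and ce: "card e = k"
      using e edge_fin[OF U] edge_card[OF U] by auto
    have c1: "card (e - {i}) = k - 1" using fe ce e by simp
    have "\<not> (e - {i} \<subseteq> {v})"
    proof
      assume "e - {i} \<subseteq> {v}"
      hence "card (e - {i}) \<le> card {v}" by (intro card_mono) auto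
      thus False using c1 k by simp
    qed
    then obtain j where j: "j \<in> e - {i}" "j \<noteq> v" by auto
    show ?thesis using fe j by (intro prod_zero) auto
  qed
  have "tensor_apply n k (signless_laplacian k E) ?x i = of_nat (hdeg E i) * ?x i ^ (k - 1)"
    using tensor_Q[OF _ U i, of ?x] k Z by simp
  also have "\<dots> = of_nat (hdeg E v) * ?x i ^ (k - 1)"
    using k by (cases "i = v") auto
  finally show "tensor_apply n k (signless_laplacian k E) ?x i = of_nat (hdeg E v) * ?x i ^ (k - 1)" .
qed



lemma quad_zero:
  fixes a b :: real
  assumes H: "\<And>e. e * a + e^2 * b \<le> 0"
  shows "a = 0"
proof (rule ccontr)
  assume a: "a \<noteq> 0"
  define c where "c = \<bar>b\<bar> + 1"
  have c0: "c > 0" unfolding c_def by simp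
  define e where "e = a / c"
  have "e^2 * b \<ge> - (e^2 * \<bar>b\<bar>)" using mult_left_mono[of "-\<bar>b\<bar>" b "e^2"] by simp
  moreover have "e * a - e^2 * \<bar>b\<bar> = a^2 / c^2"
  proof -
    have bc: "\<bar>b\<bar> = c - 1" unfolding c_def by simp
    show ?thesis unfolding bc e_def using c0 by (simp add: field_simps power2_eq_square)
  qed
  moreover have "a^2 / c^2 > 0" using a c0 by simp
  ultimately have "e * a + e^2 * b > 0" by linarith
  thus False using H[of e] by simp
qed

definition qf :: "nat set \<Rightarrow> (nat \<Rightarrow> nat \<Rightarrow> real) \<Rightarrow> (nat \<Rightarrow> real) \<Rightarrow> real" where
  "qf V A z = (\<Sum>i\<in>V. \<Sum>j\<in>V. A i j * z i * z j)"

lemma qf_scale: "qf V A (\<lambda>i. c * z i) = c^2 * qf V A z"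
  unfolding qf_def by (simp add: sum_distrib_left algebra_simps power2_eq_square)

lemma qf_cong: "(\<And>i. i \<in> V \<Longrightarrow> z i = z' i) \<Longrightarrow> qf V A z = qf V A z'"
  unfolding qf_def by (intro sum.cong refl) auto

lemma qf_expand:
  assumes fin: "finite V" and i0: "i0 \<in> V" and sym: "\<And>i j. i \<in> V \<Longrightarrow> j \<in> V \<Longrightarrow> A i j = A j i"
  shows "qf V A (\<lambda>i. x i + e * (if i = i0 then 1 else 0))
       = qf V A x + 2 * e * (\<Sum>j\<in>V. A i0 j * x j) + e^2 * A i0 i0"
proof -
  define d where "d = (\<lambda>i. if i = i0 then 1 else (0::real))"
  have ds: "(\<Sum>i\<in>V. d i * F i) = F i0" for F
  proof -
    have "(\<Sum>i\<in>V. d i * F i) = (\<Sum>i\<in>V. if i = i0 then F i else 0)" by (intro sum.cong refl) (simp add: d_def)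
    also have "\<dots> = F i0" using fin i0 by (simp add: sum.delta')
    finally show ?thesis .
  qed
  have pt: "A i j * (x i + e * d i) * (x j + e * d j) = A i j * x i * x j + e * (d i * (A i j * x j))
     + e * (d j * (A i j * x i)) + e^2 * (d i * (d j * A i j))" for i j
    by (simp add: algebra_simps power2_eq_square)
  have "qf V A (\<lambda>i. x i + e * d i) = qf V A x + e * (\<Sum>i\<in>V. d i * (\<Sum>j\<in>V. A i j * x j))
     + e * (\<Sum>i\<in>V. \<Sum>j\<in>V. d j * (A i j * x i)) + e^2 * (\<Sum>i\<in>V. d i * (\<Sum>j\<in>V. d j * A i j))"
    unfolding qf_def pt by (simp add: sum.distrib sum_distrib_left)
  also have "(\<Sum>i\<in>V. \<Sum>j\<in>V. d j * (A i j * x i)) = (\<Sum>i\<in>V. x i * (\<Sum>j\<in>V. d j * A i j))"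
    by (simp add: sum_distrib_left algebra_simps)
  also have "\<dots> = (\<Sum>i\<in>V. x i * A i i0)" using ds by simp
  also have "\<dots> = (\<Sum>j\<in>V. A i0 j * x j)" using sym i0 by (intro sum.cong refl) (simp add: mult.commute)
  also have "(\<Sum>i\<in>V. d i * (\<Sum>j\<in>V. A i j * x j)) = (\<Sum>j\<in>V. A i0 j * x j)" using ds by simp
  also have "(\<Sum>i\<in>V. d i * (\<Sum>j\<in>V. d j * A i j)) = A i0 i0" using ds by simp
  finally show ?thesis unfolding d_def by (simp add: algebra_simps)
qed

lemma coord_cont [continuous_intros]: "continuous_on S (\<lambda>x. x i :: 'a::topological_space)"
  by (rule continuous_on_subset[OF continuous_on_product_coordinates]) simp

lemma rayleigh:
  fixes A :: "nat \<Rightarrow> nat \<Rightarrow> real" and z0 :: "nat \<Rightarrow> real"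
  assumes fin: "finite V" and sym: "\<And>i j. i \<in> V \<Longrightarrow> j \<in> V \<Longrightarrow> A i j = A j i"
    and z0: "(\<Sum>i\<in>V. z0 i ^ 2) = 1"
  shows "\<exists>x \<mu>. (\<exists>i\<in>V. x i \<noteq> 0) \<and> (\<forall>i\<in>V. (\<Sum>j\<in>V. A i j * x j) = \<mu> * x i) \<and> qf V A z0 \<le> \<mu>"
proof -
  define C where "C = (\<lambda>i. if i \<in> V then cball 0 1 else {0::real})"
  define S where "S = Pi\<^sub>E UNIV C \<inter> {z. (\<Sum>i\<in>V. z i ^ 2) = 1}"
  have cC: "compact (C i)" for i unfolding C_def by auto
  have cl: "closed {z :: nat \<Rightarrow> real. (\<Sum>i\<in>V. z i ^ 2) = 1}"
    by (intro closed_Collect_eq continuous_intros continuous_on_product_coordinates)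
  have cS: "compact S" unfolding S_def by (intro compact_Int_closed compact_Pi_fun cC cl)
  have inS: "z \<in> S" if zV0: "\<And>i. i \<notin> V \<Longrightarrow> z i = 0" and zs: "(\<Sum>i\<in>V. z i ^ 2) = 1" for z
  proof -
    have "\<bar>z i\<bar> \<le> 1" if i: "i \<in> V" for i
    proof -
      have "z i ^ 2 \<le> (\<Sum>i\<in>V. z i ^ 2)" using fin i by (intro member_le_sum) auto
      hence "z i ^ 2 \<le> 1" using zs by simp
      thus ?thesis by (simp add: abs_square_le_1)
    qed
    thus ?thesis using zV0 zs unfolding S_def C_def by (auto simp: PiE_iff)
  qed
  define z1 where "z1 = (\<lambda>i. if i \<in> V then z0 i else 0)"
  have z1S: "z1 \<in> S" by (rule inS) (use z0 in \<open>auto simp: z1_def\<close>)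
  have "continuous_on S (qf V A)"
    unfolding qf_def by (intro continuous_intros)
  then obtain x where xS: "x \<in> S" and xmax: "\<And>z. z \<in> S \<Longrightarrow> qf V A z \<le> qf V A x"
    using continuous_attains_sup[OF cS] z1S by blast
  define \<mu> where "\<mu> = qf V A x"
  have x0: "x i = 0" if "i \<notin> V" for i
  proof -
    have "x i \<in> C i" using xS unfolding S_def by (auto simp: PiE_iff)
    thus ?thesis using that unfolding C_def by simp
  qed
  have x1: "(\<Sum>i\<in>V. x i ^ 2) = 1" using xS unfolding S_def by simp
  have ge: "qf V A z0 \<le> \<mu>"
  proof -
    have "qf V A z0 = qf V A z1" by (rule qf_cong) (simp add: z1_def)
    thus ?thesis using xmax[OF z1S] unfolding \<mu>_def by simp
  qed
  have claim: "qf V A z \<le> \<mu> * (\<Sum>i\<in>V. z i ^ 2)" if zV: "\<And>i. i \<notin> V \<Longrightarrow> z i = 0" for z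
  proof (cases "(\<Sum>i\<in>V. z i ^ 2) = 0")
    case True
    hence "\<forall>i\<in>V. z i ^ 2 = 0" using sum_nonneg_eq_0_iff[OF fin, of "\<lambda>i. z i ^ 2"] by simp
    hence "qf V A z = qf V A (\<lambda>_. 0)" by (intro qf_cong) simp
    thus ?thesis using True by (simp add: qf_def)
  next
    case False
    define s where "s = (\<Sum>i\<in>V. z i ^ 2)"
    have s0: "s > 0" using False unfolding s_def by (simp add: less_le sum_nonneg)
    define r where "r = 1 / sqrt s"
    have r2: "r^2 = 1 / s" unfolding r_def using s0 by (simp add: power_divide)
    have "(\<lambda>i. r * z i) \<in> S"
    proof (rule inS)
      show "r * z i = 0" if "i \<notin> V" for i using zV that by simp
      have "(\<Sum>i\<in>V. (r * z i) ^ 2) = r^2 * s" unfolding s_def by (simp add: power_mult_distrib sum_distrib_left)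
      thus "(\<Sum>i\<in>V. (r * z i) ^ 2) = 1" using r2 s0 by simp
    qed
    hence "qf V A (\<lambda>i. r * z i) \<le> \<mu>" unfolding \<mu>_def by (rule xmax)
    hence "r^2 * qf V A z \<le> \<mu>" using qf_scale[of V A r z] by simp
    hence "qf V A z / s \<le> \<mu>" using r2 by simp
    thus ?thesis using s0 unfolding s_def by (simp add: divide_le_eq mult.commute)
  qed
  have eigx: "(\<Sum>j\<in>V. A i0 j * x j) = \<mu> * x i0" if i0: "i0 \<in> V" for i0
  proof -
    define L where "L = (\<Sum>j\<in>V. A i0 j * x j)"
    have "e * (2 * (L - \<mu> * x i0)) + e^2 * (A i0 i0 - \<mu>) \<le> 0" for e
    proof -
      define z where "z = (\<lambda>i. x i + e * (if i = i0 then 1 else 0))"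
      have zV: "z i = 0" if "i \<notin> V" for i unfolding z_def using x0[OF that] that i0 by auto
      have "(\<Sum>i\<in>V. z i ^ 2) = (\<Sum>i\<in>V. x i ^ 2) + (\<Sum>i\<in>V. if i = i0 then 2 * e * x i + e^2 else 0)"
        unfolding z_def sum.distrib[symmetric] by (intro sum.cong refl) (auto simp: power2_eq_square algebra_simps)
      also have "\<dots> = 1 + 2 * e * x i0 + e^2" using x1 fin i0 by (simp add: sum.delta')
      finally have nz: "(\<Sum>i\<in>V. z i ^ 2) = 1 + 2 * e * x i0 + e^2" .
      have "qf V A z = \<mu> + 2 * e * L + e^2 * A i0 i0"
        unfolding z_def L_def \<mu>_def by (rule qf_expand[OF fin i0 sym])
      moreover have "qf V A z \<le> \<mu> * (\<Sum>i\<in>V. z i ^ 2)" by (rule claim) (rule zV)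
      ultimately have "\<mu> + 2 * e * L + e^2 * A i0 i0 \<le> \<mu> * (1 + 2 * e * x i0 + e^2)" using nz by simp
      thus ?thesis by (simp add: algebra_simps)
    qed
    hence "2 * (L - \<mu> * x i0) = 0" by (rule quad_zero)
    thus ?thesis unfolding L_def by simp
  qed
  have "\<exists>i\<in>V. x i \<noteq> 0"
  proof (rule ccontr)
    assume "\<not> ?thesis"
    hence "(\<Sum>i\<in>V. x i ^ 2) = 0" by simp
    thus False using x1 by simp
  qed
  thus ?thesis using eigx ge by blast
qed



lemma edge_pair:
  assumes U: "uniform_hypergraph n 2 E" and e: "e \<in> E" "i \<in> e"
  obtains j where "j \<noteq> i" "e = {i, j}"
proof -
  have "card e = 2" using edge_card[OF U e(1)] .
  then obtain a b where ab: "e = {a, b}" "a \<noteq> b" by (auto simp: card_2_iff)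
  show ?thesis
  proof (cases "a = i")
    case True thus ?thesis using that[of b] ab by auto
  next
    case False
    hence "b = i" using ab e(2) by auto
    thus ?thesis using that[of a] ab by (auto simp: insert_commute)
  qed
qed

lemma edge_sum_k2:
  fixes f :: "nat \<Rightarrow> 'a::comm_semiring_1"
  assumes U: "uniform_hypergraph n 2 E" and i: "i \<in> {1..n}"
  shows "(\<Sum>e\<in>{e\<in>E. i \<in> e}. \<Prod>j\<in>e - {i}. f j) = (\<Sum>j\<in>{1..n}. if j \<noteq> i \<and> {i, j} \<in> E then f j else 0)"
proof -
  let ?T = "{j\<in>{1..n}. j \<noteq> i \<and> {i, j} \<in> E}"
  have R: "(\<Sum>j\<in>{1..n}. if j \<noteq> i \<and> {i, j} \<in> E then f j else 0) = (\<Sum>j\<in>?T. f j)"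
    using sum.inter_filter[of "{1..n}" f "\<lambda>j. j \<noteq> i \<and> {i, j} \<in> E"] by simp
  have L: "(\<Sum>e\<in>{e\<in>E. i \<in> e}. \<Prod>j\<in>e - {i}. f j) = (\<Sum>j\<in>?T. f j)"
  proof (rule sum.reindex_bij_witness[of _ "\<lambda>j. {i, j}" "\<lambda>e. the_elem (e - {i})"])
    fix a assume a: "a \<in> {e\<in>E. i \<in> e}"
    then obtain j where j: "j \<noteq> i" "a = {i, j}" using edge_pair[OF U] by blast
    have aj: "a - {i} = {j}" using j by auto
    show "{i, the_elem (a - {i})} = a" unfolding aj using j by simp
    have "a \<subseteq> {1..n}" using edge_sub[OF U] a by auto
    hence "j \<in> {1..n}" using j by auto
    thus "the_elem (a - {i}) \<in> ?T" unfolding aj using a j by auto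
    show "f (the_elem (a - {i})) = (\<Prod>j\<in>a - {i}. f j)" unfolding aj by simp
  next
    fix b assume b: "b \<in> ?T"
    have "{i, b} - {i} = {b}" using b by auto
    thus "the_elem ({i, b} - {i}) = b" by simp
    show "{i, b} \<in> {e\<in>E. i \<in> e}" using b by auto
  qed
  show ?thesis using L R by simp
qed

lemma qf_unit:
  assumes fin: "finite V" and v: "v \<in> V"
  shows "qf V A (\<lambda>i. if i = v then 1 else 0) = A v v"
proof -
  have "qf V A (\<lambda>i. if i = v then 1 else 0) = (\<Sum>i\<in>V. if i = v then (\<Sum>j\<in>V. if j = v then A i j else 0) else 0)"
    unfolding qf_def by (intro sum.cong refl) (auto intro: sum.cong)
  also have "\<dots> = A v v" using fin v by (simp add: sum.delta')
  finally show ?thesis .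
qed

lemma eig_k2:
  assumes U: "uniform_hypergraph n 2 E" and v: "v \<in> {1..n}"
  shows "\<exists>lam. tensor_eigenvalue n 2 (signless_laplacian 2 E) lam \<and> cmod lam \<ge> real (hdeg E v)"
proof -
  define A where "A = (\<lambda>i j. (if i = j then real (hdeg E i) else 0) + (if i \<noteq> j \<and> {i, j} \<in> E then 1 else 0))"
  have sym: "A i j = A j i" for i j unfolding A_def by (auto simp: insert_commute)
  define z0 where "z0 = (\<lambda>i. if i = v then 1 else (0::real))"
  have z0s: "(\<Sum>i\<in>{1..n}. z0 i ^ 2) = 1"
  proof -
    have "(\<Sum>i\<in>{1..n}. z0 i ^ 2) = (\<Sum>i\<in>{1..n}. if i = v then 1 else 0)" by (intro sum.cong refl) (simp add: z0_def)
    thus ?thesis using v by (simp add: sum.delta')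
  qed
  obtain x \<mu> where xne: "\<exists>i\<in>{1..n}. x i \<noteq> 0" and eq: "\<forall>i\<in>{1..n}. (\<Sum>j\<in>{1..n}. A i j * x j) = \<mu> * x i"
    and ge: "qf {1..n} A z0 \<le> \<mu>"
    using rayleigh[of "{1..n}" A z0] sym z0s by auto
  have "qf {1..n} A z0 = A v v" unfolding z0_def by (rule qf_unit) (use v in auto)
  hence \<mu>ge: "\<mu> \<ge> real (hdeg E v)" using ge unfolding A_def by simp
  define X where "X = (\<lambda>i. complex_of_real (x i))"
  have "tensor_eigenvalue n 2 (signless_laplacian 2 E) (of_real \<mu>)"
    unfolding tensor_eigenvalue_def
  proof (intro exI[of _ X] conjI ballI)
    show "\<exists>i\<in>{1..n}. X i \<noteq> 0" using xne unfolding X_def by auto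
    fix i assume i: "i \<in> {1..n}"
    have As: "(\<Sum>j\<in>{1..n}. A i j * x j) = real (hdeg E i) * x i + (\<Sum>j\<in>{1..n}. if j \<noteq> i \<and> {i, j} \<in> E then x j else 0)"
    proof -
      have "(\<Sum>j\<in>{1..n}. A i j * x j) = (\<Sum>j\<in>{1..n}. (if j = i then real (hdeg E i) * x j else 0)
            + (if j \<noteq> i \<and> {i, j} \<in> E then x j else 0))"
        unfolding A_def by (intro sum.cong refl) (auto simp: algebra_simps)
      also have "\<dots> = real (hdeg E i) * x i + (\<Sum>j\<in>{1..n}. if j \<noteq> i \<and> {i, j} \<in> E then x j else 0)"
        using i by (simp add: sum.distrib sum.delta')
      finally show ?thesis .
    qed
    have "tensor_apply n 2 (signless_laplacian 2 E) X i
        = of_nat (hdeg E i) * X i + (\<Sum>j\<in>{1..n}. if j \<noteq> i \<and> {i, j} \<in> E then X j else 0)"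
      using tensor_Q[OF _ U i, of X] edge_sum_k2[OF U i, of X] by simp
    also have "\<dots> = of_real (real (hdeg E i) * x i + (\<Sum>j\<in>{1..n}. if j \<noteq> i \<and> {i, j} \<in> E then x j else 0))"
      unfolding X_def of_real_add of_real_mult of_real_sum by (simp add: if_distrib cong: if_cong)
    also have "\<dots> = of_real (\<mu> * x i)" using eq i As by simp
    finally show "tensor_apply n 2 (signless_laplacian 2 E) X i = of_real \<mu> * X i ^ (2 - 1)"
      unfolding X_def by simp
  qed
  moreover have "cmod (of_real \<mu>) \<ge> real (hdeg E v)" using \<mu>ge by simp
  ultimately show ?thesis by blast
qed



lemma tensor_local:
  assumes "\<And>j. j \<in> {1..n} \<Longrightarrow> x j = y j"
  shows "tensor_apply n k T x i = tensor_apply n k T y i"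
proof -
  have "prod_list (map x xs) = prod_list (map y xs)" if "set xs \<subseteq> {1..n}" for xs
    using that assms by (induction xs) auto
  thus ?thesis unfolding tensor_apply_def by (intro sum.cong refl) auto
qed

lemma prod_list_scale:
  fixes x :: "nat \<Rightarrow> complex"
  shows "prod_list (map (\<lambda>j. c * x j) xs) = c ^ length xs * prod_list (map x xs)"
  by (induction xs) (auto simp: algebra_simps)

lemma tensor_hom:
  fixes x :: "nat \<Rightarrow> complex"
  shows "tensor_apply n k T (\<lambda>j. c * x j) i = c ^ (k - 1) * tensor_apply n k T x i"
  unfolding tensor_apply_def sum_distrib_left
  by (intro sum.cong refl) (auto simp: prod_list_scale algebra_simps)

lemma tendsto_prod_list_map:
  fixes F :: "nat \<Rightarrow> nat \<Rightarrow> complex"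
  assumes "\<And>j. (\<lambda>m. F m j) \<longlonglongrightarrow> G j"
  shows "(\<lambda>m. prod_list (map (F m) xs)) \<longlonglongrightarrow> prod_list (map G xs)"
  by (induction xs) (auto intro!: tendsto_mult assms)

lemma tendsto_tensor:
  fixes F :: "nat \<Rightarrow> nat \<Rightarrow> complex"
  assumes "\<And>j. (\<lambda>m. F m j) \<longlonglongrightarrow> G j"
  shows "(\<lambda>m. tensor_apply n k T (F m) i) \<longlonglongrightarrow> tensor_apply n k T G i"
  unfolding tensor_apply_def
  by (intro tendsto_sum tendsto_mult tendsto_const tendsto_prod_list_map assms)

lemma normalize_eig:
  assumes "tensor_eigenvalue n k T lam"
  shows "\<exists>x. (\<forall>i\<in>{1..n}. tensor_apply n k T x i = lam * x i ^ (k - 1))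
           \<and> (\<Sum>i\<in>{1..n}. cmod (x i) ^ 2) = 1"
proof -
  obtain x where xne: "\<exists>i\<in>{1..n}. x i \<noteq> 0" and eq: "\<forall>i\<in>{1..n}. tensor_apply n k T x i = lam * x i ^ (k - 1)"
    using assms unfolding tensor_eigenvalue_def by blast
  define s where "s = (\<Sum>i\<in>{1..n}. cmod (x i) ^ 2)"
  have s0: "s > 0"
  proof -
    obtain i where i: "i \<in> {1..n}" "x i \<noteq> 0" using xne by auto
    have "cmod (x i) ^ 2 \<le> s" unfolding s_def using i by (intro member_le_sum) auto
    moreover have "cmod (x i) ^ 2 > 0" using i by simp
    ultimately show ?thesis by linarith
  qed
  define r where "r = 1 / sqrt s"
  have r0: "r > 0" using s0 unfolding r_def by simp
  define y where "y = (\<lambda>j. complex_of_real r * x j)"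
  have "\<forall>i\<in>{1..n}. tensor_apply n k T y i = lam * y i ^ (k - 1)"
  proof
    fix i assume i: "i \<in> {1..n}"
    have "tensor_apply n k T y i = complex_of_real r ^ (k - 1) * tensor_apply n k T x i"
      unfolding y_def by (rule tensor_hom)
    also have "\<dots> = lam * y i ^ (k - 1)" using eq i unfolding y_def by (simp add: power_mult_distrib)
    finally show "tensor_apply n k T y i = lam * y i ^ (k - 1)" .
  qed
  moreover have "(\<Sum>i\<in>{1..n}. cmod (y i) ^ 2) = 1"
  proof -
    have "(\<Sum>i\<in>{1..n}. cmod (y i) ^ 2) = r^2 * s"
      unfolding y_def s_def using r0 by (simp add: norm_mult power_mult_distrib sum_distrib_left)
    also have "\<dots> = 1" unfolding r_def using s0 by (simp add: power_divide)
    finally show ?thesis .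
  qed
  ultimately show ?thesis by blast
qed

lemma attain:
  assumes bnd: "\<And>lam. tensor_eigenvalue n k T lam \<Longrightarrow> cmod lam \<le> B"
    and ne: "\<exists>lam. tensor_eigenvalue n k T lam"
  shows "\<exists>lam. tensor_eigenvalue n k T lam \<and> cmod lam = spectral_radius n k T"
proof -
  define L where "L = cmod ` {lam. tensor_eigenvalue n k T lam}"
  define \<rho> where "\<rho> = Sup L"
  have \<rho>def: "spectral_radius n k T = \<rho>" unfolding \<rho>_def L_def spectral_radius_def ..
  have Lne: "L \<noteq> {}" using ne unfolding L_def by auto
  have Lbdd: "bdd_above L" unfolding L_def bdd_above_def using bnd by blast
  have "\<forall>m. \<exists>lam. tensor_eigenvalue n k T lam \<and> \<rho> - 1 / real (Suc m) < cmod lam"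
  proof
    fix m
    have "\<rho> - 1 / real (Suc m) < \<rho>" by simp
    then obtain a where "a \<in> L" "\<rho> - 1 / real (Suc m) < a" unfolding \<rho>_def using less_cSupE[OF _ Lne] by blast
    thus "\<exists>lam. tensor_eigenvalue n k T lam \<and> \<rho> - 1 / real (Suc m) < cmod lam" unfolding L_def by auto
  qed
  then obtain lf where lf: "\<And>m. tensor_eigenvalue n k T (lf m)" and lfgt: "\<And>m. \<rho> - 1 / real (Suc m) < cmod (lf m)"
    by metis
  have lfle: "cmod (lf m) \<le> \<rho>" for m unfolding \<rho>_def L_def
    by (rule cSup_upper) (use lf Lbdd in \<open>auto simp: L_def\<close>)
  have lim\<rho>: "(\<lambda>m. cmod (lf m)) \<longlonglongrightarrow> \<rho>"
  proof (rule tendsto_sandwich[of "\<lambda>m. \<rho> - 1 / real (Suc m)" _ _ "\<lambda>m. \<rho>"])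
    show "\<forall>\<^sub>F m in sequentially. \<rho> - 1 / real (Suc m) \<le> cmod (lf m)" using lfgt by (simp add: less_imp_le)
    show "\<forall>\<^sub>F m in sequentially. cmod (lf m) \<le> \<rho>" using lfle by simp
    show "(\<lambda>m. \<rho> - 1 / real (Suc m)) \<longlonglongrightarrow> \<rho>"
      using tendsto_diff[OF tendsto_const[of \<rho>] LIMSEQ_inverse_real_of_nat] by (simp add: inverse_eq_divide)
  qed simp
  have "\<forall>m. \<exists>x. (\<forall>i\<in>{1..n}. tensor_apply n k T x i = lf m * x i ^ (k - 1)) \<and> (\<Sum>i\<in>{1..n}. cmod (x i) ^ 2) = 1"
    using normalize_eig[OF lf] by blast
  then obtain xf where xfe: "\<And>m i. i \<in> {1..n} \<Longrightarrow> tensor_apply n k T (xf m) i = lf m * xf m i ^ (k - 1)"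
    and xf1: "\<And>m. (\<Sum>i\<in>{1..n}. cmod (xf m i) ^ 2) = 1" by metis
  define g where "g = (\<lambda>m i. if i = 0 then lf m else if i \<in> {1..n} then xf m i else 0)"
  define C where "C = (\<lambda>i::nat. if i = 0 then cball 0 B else if i \<in> {1..n} then cball 0 1 else {0::complex})"
  have cC: "compact (C i)" for i unfolding C_def by auto
  have gC: "g m \<in> Pi\<^sub>E UNIV C" for m
  proof -
    have "g m i \<in> C i" for i
    proof (cases "i = 0")
      case True thus ?thesis unfolding g_def C_def using bnd[OF lf[of m]] by simp
    next
      case False
      show ?thesis
      proof (cases "i \<in> {1..n}")
        case True
        have "cmod (xf m i) ^ 2 \<le> 1" using xf1[of m] True by (metis finite_atLeastAtMost member_le_sum zero_le_power2)
        hence "cmod (xf m i) \<le> 1" by (simp add: abs_square_le_1)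
        thus ?thesis unfolding g_def C_def using False True by simp
      next
        case F2: False
        thus ?thesis unfolding g_def C_def using False by simp
      qed
    qed
    thus ?thesis by (auto simp: PiE_iff)
  qed
  obtain l r where lC: "l \<in> Pi\<^sub>E UNIV C" and r: "strict_mono r"
    and conv: "\<And>i. (\<lambda>m. g (r m) i) \<longlonglongrightarrow> l i"
    using seq_compact_fun[of C g, OF cC gC] by blast
  define \<mu> where "\<mu> = l 0"
  have lam_conv: "(\<lambda>m. lf (r m)) \<longlonglongrightarrow> \<mu>" using conv[of 0] unfolding g_def \<mu>_def by simp
  have "(\<lambda>m. cmod (lf (r m))) \<longlonglongrightarrow> cmod \<mu>" by (rule tendsto_norm[OF lam_conv])
  moreover have "(\<lambda>m. cmod (lf (r m))) \<longlonglongrightarrow> \<rho>"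
    using LIMSEQ_subseq_LIMSEQ[OF lim\<rho> r] by (simp add: o_def)
  ultimately have mu\<rho>: "cmod \<mu> = \<rho>" by (rule LIMSEQ_unique)
  have eqg: "tensor_apply n k T (g m) i = lf m * g m i ^ (k - 1)" if i: "i \<in> {1..n}" for m i
  proof -
    have "tensor_apply n k T (g m) i = tensor_apply n k T (xf m) i"
      by (rule tensor_local) (auto simp: g_def)
    thus ?thesis using xfe[OF i] i unfolding g_def by simp
  qed
  have leq: "tensor_apply n k T l i = \<mu> * l i ^ (k - 1)" if i: "i \<in> {1..n}" for i
  proof -
    have "(\<lambda>m. tensor_apply n k T (g (r m)) i) \<longlonglongrightarrow> tensor_apply n k T l i"
      by (rule tendsto_tensor) (rule conv)
    moreover have "(\<lambda>m. tensor_apply n k T (g (r m)) i) \<longlonglongrightarrow> \<mu> * l i ^ (k - 1)"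
      unfolding eqg[OF i] by (intro tendsto_mult tendsto_power lam_conv conv)
    ultimately show ?thesis by (rule LIMSEQ_unique)
  qed
  have "(\<lambda>m. \<Sum>i\<in>{1..n}. cmod (g (r m) i) ^ 2) \<longlonglongrightarrow> (\<Sum>i\<in>{1..n}. cmod (l i) ^ 2)"
    by (intro tendsto_sum tendsto_power tendsto_norm conv)
  moreover have "(\<Sum>i\<in>{1..n}. cmod (g (r m) i) ^ 2) = 1" for m
  proof -
    have "(\<Sum>i\<in>{1..n}. cmod (g (r m) i) ^ 2) = (\<Sum>i\<in>{1..n}. cmod (xf (r m) i) ^ 2)"
      by (intro sum.cong refl) (auto simp: g_def)
    thus ?thesis using xf1[of "r m"] by simp
  qed
  ultimately have "(\<lambda>m. 1::real) \<longlonglongrightarrow> (\<Sum>i\<in>{1..n}. cmod (l i) ^ 2)" by simp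
  hence "(\<Sum>i\<in>{1..n}. cmod (l i) ^ 2) = 1" by (simp add: LIMSEQ_const_iff)
  hence lne: "\<exists>i\<in>{1..n}. l i \<noteq> 0" by (rule contrapos_pp) simp
  have "tensor_eigenvalue n k T \<mu>" unfolding tensor_eigenvalue_def using lne leq by blast
  thus ?thesis using mu\<rho> \<rho>def by auto
qed



theorem corollary2p1:
  fixes n k :: nat and E :: "nat set set"
  assumes "k \<ge> 2" and "n \<ge> 2"
    and "uniform_hypergraph n k E"
    and "hconnected n E"
  defines "d1 \<equiv> real (deg_seq n E ! 0)"
    and "d2 \<equiv> real (deg_seq n E ! 1)"
    and "\<rho> \<equiv> spectral_radius n k (signless_laplacian k E)"
  shows "\<rho> \<ge> d1 \<and>
    \<rho> \<le> d1 + d1 powr (1 / real k) * d2 powr (1 - 1 / real k) \<and>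
    (\<rho> = d1 + d1 powr (1 / real k) * d2 powr (1 - 1 / real k) \<longleftrightarrow> hregular n E)"
proof -
  note k = assms(1) and n = assms(2) and U = assms(3) and C = assms(4)
  let ?Q = "signless_laplacian k E"
  let ?B = "d1 + d1 powr (1 / real k) * d2 powr (1 - 1 / real k)"
  obtain v where v: "v \<in> {1..n}" and vd: "hdeg E v = deg_seq n E ! 0"
    and vmax: "\<And>i. i \<in> {1..n} \<Longrightarrow> hdeg E i \<le> hdeg E v"
    and sec0: "\<And>p. p \<in> {1..n} \<Longrightarrow> p \<noteq> v \<Longrightarrow> hdeg E p \<le> deg_seq n E ! 1"
    using deg_seq_facts(1)[OF n, of E] by blast
  obtain q where q: "q \<in> {1..n}" and qd: "hdeg E q = deg_seq n E ! 1"
    using deg_seq_facts(2)[OF n, of E] by blast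
  have d1v: "d1 = real (hdeg E v)" unfolding d1_def vd ..
  have d2q: "d2 = real (hdeg E q)" unfolding d2_def qd ..
  have sec: "\<And>p. p \<in> {1..n} \<Longrightarrow> p \<noteq> v \<Longrightarrow> real (hdeg E p) \<le> d2"
    using sec0 unfolding d2_def by simp
  have d2pos: "d2 \<ge> 1" unfolding d2q using hdeg_pos[OF n U C q] by simp
  have d21: "d2 \<le> real (hdeg E v)" unfolding d2q using vmax[OF q] by simp
  define L where "L = cmod ` {lam. tensor_eigenvalue n k ?Q lam}"
  have \<rho>L: "\<rho> = Sup L" unfolding \<rho>_def L_def spectral_radius_def ..
  have bnd: "cmod lam \<le> ?B" if lamE: "tensor_eigenvalue n k ?Q lam" for lam
  proof -
    obtain x where xne: "\<exists>i\<in>{1..n}. x i \<noteq> 0" and xe: "\<forall>i\<in>{1..n}. tensor_apply n k ?Q x i = lam * x i ^ (k - 1)"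
      using lamE unfolding tensor_eigenvalue_def apply (elim exE conjE) by (rule that)
    have xe': "\<And>i. i \<in> {1..n} \<Longrightarrow> tensor_apply n k ?Q x i = lam * x i ^ (k - 1)" using xe by blast
    show ?thesis unfolding d1v using eig_bound(1)[OF k n U v vmax sec d2pos d21 xne xe'] .
  qed
  have ex: "\<exists>lam. tensor_eigenvalue n k ?Q lam \<and> cmod lam \<ge> d1"
  proof (cases "k = 2")
    case True
    thus ?thesis using eig_k2[of n E v] U v unfolding d1v by simp
  next
    case False
    hence "k \<ge> 3" using k by simp
    from eig_unit[OF this U v] show ?thesis unfolding d1v by (intro exI[of _ "of_nat (hdeg E v)"]) simp
  qed
  have exE': "\<exists>lam. tensor_eigenvalue n k ?Q lam" using ex by auto
  have Lne: "L \<noteq> {}" using exE' unfolding L_def by auto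
  have Lbdd: "bdd_above L" unfolding L_def by (rule bdd_aboveI2[of _ _ ?B]) (use bnd in simp)
  have P1: "\<rho> \<ge> d1"
  proof -
    obtain lam where lamE: "tensor_eigenvalue n k ?Q lam" and lamge: "cmod lam \<ge> d1" using ex by auto
    have "cmod lam \<in> L" unfolding L_def by (rule imageI) (simp add: lamE)
    hence "cmod lam \<le> \<rho>" unfolding \<rho>L by (rule cSup_upper[OF _ Lbdd])
    thus ?thesis using lamge by simp
  qed
  have P2: "\<rho> \<le> ?B" unfolding \<rho>L by (rule cSup_least[OF Lne]) (use bnd in \<open>auto simp: L_def\<close>)
  have d1pos: "d1 > 0" using d2pos d21 d1v by simp
  have twice: "d + d powr (1 / real k) * d powr (1 - 1 / real k) = 2 * d" if "d > 0" for d :: real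
  proof -
    have "d powr (1 / real k) * d powr (1 - 1 / real k) = d powr (1 / real k + (1 - 1 / real k))"
      by (simp add: powr_add[symmetric])
    also have "\<dots> = d" using that by simp
    finally show ?thesis by simp
  qed
  have P3: "\<rho> = ?B \<longleftrightarrow> hregular n E"
  proof
    assume eq: "\<rho> = ?B"
    obtain lam where lam: "tensor_eigenvalue n k ?Q lam" and lr: "cmod lam = \<rho>"
      using attain[of n k ?Q ?B, OF bnd exE'] unfolding \<rho>_def by auto
    obtain x where xne: "\<exists>i\<in>{1..n}. x i \<noteq> 0" and xe: "\<forall>i\<in>{1..n}. tensor_apply n k ?Q x i = lam * x i ^ (k - 1)"
      using lam unfolding tensor_eigenvalue_def apply (elim exE conjE) by (rule that)
    have xe': "\<And>i. i \<in> {1..n} \<Longrightarrow> tensor_apply n k ?Q x i = lam * x i ^ (k - 1)" using xe by blast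
    have "cmod lam = ?B" using lr eq by simp
    hence cB': "cmod lam = real (hdeg E v) + real (hdeg E v) powr (1 / real k) * d2 powr (1 - 1 / real k)" unfolding d1v .
    note EB = eig_bound(2)[OF k n U v vmax sec d2pos d21 xne xe']
    have "real (hdeg E v) = d2" using EB cB' by blast
    hence d12: "d2 = d1" using d1v by simp
    have "cmod lam = 2 * real (hdeg E v)" using \<open>cmod lam = ?B\<close> twice[OF d1pos] unfolding d12 d1v by simp
    thus "hregular n E" using reg_from_eq[OF k n U C v vmax xne xe'] by simp
  next
    assume R: "hregular n E"
    have "\<forall>i\<in>{1..n}. \<forall>j\<in>{1..n}. hdeg E i = hdeg E j" using R unfolding hregular_def .
    hence "hdeg E q = hdeg E v" using q v by blast
    hence d12: "d2 = d1" using d1v d2q by simp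
    have B2: "?B = 2 * d1" unfolding d12 using twice[OF d1pos] .
    have "tensor_eigenvalue n k ?Q (2 * of_nat (hdeg E v))" by (rule eig_regular[OF k U R v])
    hence "cmod (2 * of_nat (hdeg E v) :: complex) \<in> L" unfolding L_def by (intro imageI) simp
    hence "cmod (2 * of_nat (hdeg E v) :: complex) \<le> \<rho>" unfolding \<rho>L by (rule cSup_upper[OF _ Lbdd])
    hence "2 * d1 \<le> \<rho>" unfolding d1v by (simp add: norm_mult)
    thus "\<rho> = ?B" using P2 B2 by simp
  qed
  show ?thesis by (intro conjI P1 P2 P3)
qed


end
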